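(* Let $m\ge3$, let $w_0^2(m)=\big(\sum_{l=1}^{m-1}\frac{m-l}{l^2}\big)^{-1}$, and for $k\ge0$ let $$w_{k+1}^2(m)=w_k^2(m)+\Big(\sum_{l=1}^{m-1}\frac{m-l}{l^2-w_k^2(m)}\Big)^{-1},$$ with $w_k(m)>0$. Then $w_0^2<w_1^2<\dots<w_k^2<1$ for all $k$, $\lim_{k\to\infty}w_k(m)=1$, and for each $k$, writing $w_k(m)=1-\varepsilon$ with $0<\varepsilon<1$, $$\frac{4\varepsilon}{7m-4}<w_{k+1}^2(m)-w_k^2(m)<\frac{1}{m-1}.$$ *)

theory Defs
  imports Complex_Main
begin

fun wsq :: "nat \<Rightarrow> nat \<Rightarrow> real" where
  "wsq m 0 = 1 / (\<Sum>l=1..m-1. (real m - real l) / (real l)^2)"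
| "wsq m (Suc k) = wsq m k + 1 / (\<Sum>l=1..m-1. (real m - real l) / ((real l)^2 - wsq m k))"

definition w :: "nat \<Rightarrow> nat \<Rightarrow> real" where
  "w m k = sqrt (wsq m k)"

end

theory Submission
  imports Defs
begin

lemma qq: "(a::real) > 0 \<Longrightarrow> 1/(a*(a+2)) = 1/(2*a) - 1/(2*(a+2))"
  by (simp add: divide_simps)

lemma aux: "4 * (1 - (v::real)) < d * (c::real) \<Longrightarrow> 1 - v \<le> c/4*d"
  by (simp add: field_simps)

lemma telesum: "(\<Sum>l=2..Suc n. 1 / ((real l)^2 - 1)) = 3/4 - 1/(2*(real n+1)) - 1/(2*(real n+2))"
proof (induction n)
  case 0 then show ?case by simp
next
  case (Suc n)
  have "(\<Sum>l=2..Suc (Suc n). 1 / ((real l)^2 - 1)) = (\<Sum>l=2..Suc n. 1 / ((real l)^2 - 1)) + 1 / ((real (Suc (Suc n)))^2 - 1)"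
    by simp
  also have "\<dots> = 3/4 - 1/(2*(real n+1)) - 1/(2*(real n+2)) + 1 / ((real n + 2)^2 - 1)"
    using Suc by simp
  also have "\<dots> = 3/4 - 1/(2*(real (Suc n)+1)) - 1/(2*(real (Suc n)+2))"
  proof -
    have p: "(real n + 2)^2 - 1 = (real n + 1) * (real n + 3)" by (simp add: power2_eq_square algebra_simps)
    have h: "real n + 1 > 0" "real n + 2 > 0" "real n + 3 > 0" by auto
    have q: "1 / ((real n + 1) * (real n + 3)) = 1/(2*(real n+1)) - 1/(2*(real n+3))"
    proof -
      have t: "real n + 1 + 2 = real n + 3" by simp
      show ?thesis using qq[of "real n + 1", unfolded t] h by simp
    qed
    have r: "real (Suc n) + 1 = real n + 2" "real (Suc n) + 2 = real n + 3" by auto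
    show ?thesis unfolding p q r by simp
  qed
  finally show ?case .
qed

lemma telebound: "(\<Sum>l=2..n. 1 / ((real l)^2 - 1)) \<le> 3/4"
proof (cases n)
  case 0 then show ?thesis by simp
next
  case (Suc k)
  have "1/(2*(real k+1)) \<ge> 0" "1/(2*(real k+2)) \<ge> 0" by auto
  then show ?thesis using telesum[of k] unfolding Suc by linarith
qed

definition S :: "nat \<Rightarrow> real \<Rightarrow> real" where
  "S m x = (\<Sum>l=1..m-1. (real m - real l) / ((real l)^2 - x))"

lemma S_lower:
  assumes m: "m \<ge> 3" and x: "x < 1"
  shows "S m x > (real m - 1) / (1 - x)"
proof -
  have pos: "(real m - real l) / ((real l)^2 - x) \<ge> 0" if "l \<in> {2..m-1}" for l
  proof -
    have "real l \<ge> 1" using that by simp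
    then have "(real l)^2 \<ge> 1" by (simp add: one_le_power)
    then have "x < (real l)^2" using x by linarith
    moreover have "real m - real l \<ge> 0" using that by auto
    ultimately show ?thesis by (intro divide_nonneg_pos) auto
  qed
  have "{1..m-1} = insert 1 {2..m-1}" using m by auto
  then have "S m x = (real m - 1) / (1 - x) + (\<Sum>l=2..m-1. (real m - real l) / ((real l)^2 - x))"
    unfolding S_def by simp
  moreover have "(\<Sum>l=2..m-1. (real m - real l) / ((real l)^2 - x)) \<ge> (real m - real 2) / ((real 2)^2 - x)"
    by (rule member_le_sum) (use m pos in auto)
  moreover have "(real m - real 2) / ((real 2)^2 - x) > 0" using m x by (intro divide_pos_pos) auto
  ultimately show ?thesis by linarith
qed

lemma S_upper:
  assumes m: "m \<ge> 3" and x: "x < 1" "0 \<le> x"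
  shows "S m x \<le> (real m - 1) / (1 - x) + 3 * real m / 4"
proof -
  have "{1..m-1} = insert 1 {2..m-1}" using m by auto
  then have "S m x = (real m - 1) / (1 - x) + (\<Sum>l=2..m-1. (real m - real l) / ((real l)^2 - x))"
    unfolding S_def by simp
  moreover have "(\<Sum>l=2..m-1. (real m - real l) / ((real l)^2 - x)) \<le> (\<Sum>l=2..m-1. real m * (1 / ((real l)^2 - 1)))"
  proof (rule sum_mono)
    fix l assume l: "l \<in> {2..m-1}"
    have "real l \<ge> 2" using l by simp
    then have "(real l)^2 \<ge> 2^2" by (intro power_mono) auto
    then have "(real m - real l) / ((real l)^2 - x) \<le> real m / ((real l)^2 - 1)"
      using l x by (intro frac_le) auto
    then show "(real m - real l) / ((real l)^2 - x) \<le> real m * (1 / ((real l)^2 - 1))" by simp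
  qed
  moreover have "(\<Sum>l=2..m-1. real m * (1 / ((real l)^2 - 1))) \<le> real m * (3/4)"
    unfolding sum_distrib_left[symmetric] by (rule mult_left_mono[OF telebound]) simp
  ultimately show ?thesis by linarith
qed

lemma wsq_Suc: "wsq m (Suc k) = wsq m k + 1 / S m (wsq m k)"
  by (simp add: S_def)

lemma step:
  assumes m: "m \<ge> 3" and x: "0 < x" "x < 1"
  shows "x < x + 1 / S m x \<and> x + 1 / S m x < 1 \<and> 1 / S m x < 1 / (real m - 1)
     \<and> 4 * (1 - sqrt x) / (7 * real m - 4) < 1 / S m x"
proof -
  have m1: "real m - 1 > 1" using m by simp
  have lo: "S m x > (real m - 1) / (1 - x)" using S_lower m x by auto
  have up: "S m x \<le> (real m - 1) / (1 - x) + 3 * real m / 4" using S_upper m x by auto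
  have q0: "(real m - 1) / (1 - x) > 0" using m1 x by auto
  have Spos: "S m x > 0" using lo q0 by linarith
  have a: "1 / S m x < (1 - x) / (real m - 1)"
    using lo q0 Spos by (metis inverse_eq_divide inverse_divide less_imp_inverse_less)
  have b: "(1 - x) / (real m - 1) < 1 - x" using m1 x by (simp add: divide_less_eq)
  have c: "(1 - x) / (real m - 1) < 1 / (real m - 1)" using m1 x by (simp add: divide_strict_right_mono)
  define e where "e = 1 - sqrt x"
  have sx: "0 < sqrt x" "sqrt x < 1" using x by auto
  have e: "0 < e" "e < 1" using sx e_def by auto
  have "1 - x = e * (1 + sqrt x)" unfolding e_def using x
    by (simp add: algebra_simps power2_eq_square[symmetric])
  moreover have "e * sqrt x \<ge> 0" using e sx by simp
  ultimately have ex: "1 - x \<ge> e" by (simp add: algebra_simps)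
  have t1: "(real m - 1) / (1 - x) \<le> (real m - 1) / e"
    using ex e m1 by (intro divide_left_mono) auto
  have "3 * real m / 4 * e < 3 * real m / 4" using e m by simp
  then have t2: "3 * real m / 4 < 3 * real m / (4 * e)"
    using e by (simp add: less_divide_eq)
  have "S m x < (real m - 1) / e + 3 * real m / (4 * e)" using up t1 t2 by linarith
  also have "\<dots> = (7 * real m - 4) / (4 * e)" using e by (simp add: field_simps)
  finally have "S m x < (7 * real m - 4) / (4 * e)" .
  then have "S m x * (4 * e) < 7 * real m - 4" using e by (simp add: less_divide_eq)
  then have "4 * e < (7 * real m - 4) / S m x"
    by (subst pos_less_divide_eq[OF Spos]) (simp add: mult.commute)
  moreover have A: "7 * real m - 4 > 0" using m by simp
  ultimately have "4 * e / (7 * real m - 4) < (7 * real m - 4) / S m x / (7 * real m - 4)"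
    by (intro divide_strict_right_mono) auto
  then have d: "4 * e / (7 * real m - 4) < 1 / S m x" using A by simp
  show ?thesis using a b c d Spos e_def by auto
qed

lemma inv01:
  assumes m: "m \<ge> 3"
  shows "0 < wsq m k \<and> wsq m k < 1"
proof (induction k)
  case 0
  have "S m 0 > real m - 1" using S_lower[OF m, of 0] by simp
  then have "S m 0 > 2" using m by simp
  then show ?case by (simp add: S_def)
next
  case (Suc k)
  have "wsq m k < wsq m (Suc k) \<and> wsq m (Suc k) < 1" using step[OF m, of "wsq m k"] wsq_Suc[of m k] Suc by auto
  then show ?case using Suc by linarith
qed

theorem mainTheorem11:
  fixes m :: nat
  assumes "m \<ge> 3"
  shows "0 < wsq m 0
    \<and> (\<forall>k. wsq m k < wsq m (Suc k) \<and> wsq m k < 1)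
    \<and> (\<lambda>k. w m k) \<longlonglongrightarrow> 1
    \<and> (\<forall>k. 0 < 1 - w m k \<and> 1 - w m k < 1
          \<and> 4 * (1 - w m k) / (7 * real m - 4) < wsq m (Suc k) - wsq m k
          \<and> wsq m (Suc k) - wsq m k < 1 / (real m - 1))"
proof -
  note I = inv01[OF assms]
  have st: "\<And>k. wsq m k < wsq m (Suc k) \<and> wsq m (Suc k) < 1 \<and> wsq m (Suc k) - wsq m k < 1 / (real m - 1)
     \<and> 4 * (1 - w m k) / (7 * real m - 4) < wsq m (Suc k) - wsq m k"
    using step[OF assms] I wsq_Suc unfolding w_def by (metis add_diff_cancel_left')
  have wb: "\<And>k. 0 < 1 - w m k \<and> 1 - w m k < 1"
    using I unfolding w_def by auto
  have inc: "incseq (wsq m)" using st by (intro incseq_SucI) (simp add: less_imp_le)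
  have "Bseq (wsq m)"
    using I by (intro BseqI'[where K=1]) (metis abs_of_pos less_imp_le real_norm_def)
  then have "convergent (wsq m)" using inc Bseq_monoseq_convergent mono_SucI1
    by (metis incseq_def monoseq_def)
  then obtain L where L: "wsq m \<longlonglongrightarrow> L" by (auto simp: convergent_def)
  then have "(\<lambda>k. wsq m (Suc k)) \<longlonglongrightarrow> L" by (rule LIMSEQ_Suc)
  then have "(\<lambda>k. wsq m (Suc k) - wsq m k) \<longlonglongrightarrow> L - L" using L by (rule tendsto_diff)
  then have "(\<lambda>k. (7 * real m - 4) / 4 * (wsq m (Suc k) - wsq m k)) \<longlonglongrightarrow> (7 * real m - 4) / 4 * 0"
    by (intro tendsto_mult) auto
  then have D: "(\<lambda>k. (7 * real m - 4) / 4 * (wsq m (Suc k) - wsq m k)) \<longlonglongrightarrow> 0" by simp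
  have c: "7 * real m - 4 > 0" using assms by simp
  have "1 - w m k \<le> (7 * real m - 4) / 4 * (wsq m (Suc k) - wsq m k)" for k
  proof -
    have "4 * (1 - w m k) / (7 * real m - 4) < wsq m (Suc k) - wsq m k" using st[of k] by blast
    then have "4 * (1 - w m k) < (wsq m (Suc k) - wsq m k) * (7 * real m - 4)"
      using c by (subst (asm) pos_divide_less_eq) auto
    then show ?thesis using aux by blast
  qed
  then have e2: "\<forall>\<^sub>F k in sequentially. 1 - w m k \<le> (7 * real m - 4) / 4 * (wsq m (Suc k) - wsq m k)"
    by (intro always_eventually) blast
  have e1: "\<forall>\<^sub>F k in sequentially. 0 \<le> 1 - w m k"
    using wb by (intro always_eventually) (blast intro: less_imp_le)
  have "(\<lambda>k. 1 - w m k) \<longlonglongrightarrow> 0"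
    by (rule tendsto_sandwich[OF e1 e2 tendsto_const D])
  then have "(\<lambda>k. 1 - (1 - w m k)) \<longlonglongrightarrow> 1 - 0" by (intro tendsto_diff) auto
  then have lim: "(\<lambda>k. w m k) \<longlonglongrightarrow> 1" by simp
  show ?thesis using I st wb lim by (auto simp del: wsq.simps)
qed

end
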